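(* In the supercuspidal setting below, let $p$ be odd and $k\ge c_0+1$. If $p\mid a_1a_2a_3$, then $\widehat H(\psi,a_1,a_2,a_3)=0$ for every Dirichlet character $\psi$ modulo $p^k$.
   Context: Supercuspidal setting: $p$ is a prime, $L/\mathbb Q_p$ a quadratic extension with ring of integers $\mathcal O_L$, ramification index $e\in\{1,2\}$, $d=v_p(\mathrm{disc}(L/\mathbb Q_p))$; $\eta_L$ is the nontrivial quadratic character of $\mathbb Q_p^\times$ trivial on $\mathrm{Nm}(L^\times)$. $\xi$ is a character of $L^\times$ with $\xi\neq\xi\circ(\text{Galois conjugation})$ and $\xi|_{\mathbb Q_p^\times}=\eta_L$ (for $p$ odd, $(L/\mathbb Q_p,\xi)$ is an admissible pair, i.e. corresponds to a trivial central character dihedral supercuspidal representation of $\mathrm{PGL}_2(\mathbb Q_p)$). $c(\xi)$ is its conductor exponent and $c_0=c(\xi)/e$ (a positive integer). Set $\kappa=c_0$ if $p$ odd and $L$ unramified, $\kappa=c_0+1$ if $p$ odd and $L$ ramified; for $p=2$, $\kappa=c_0+199,c_0+101,c_0+102$ according as $d=0,2,3$. Let $\gamma$ be a fixed complex number of modulus $1$ depending only on $L$. For integers $m,n$ and $k\ge1$, $$H(m,n;p^k)=\overline\gamma\,p^{-d/2}\sum_{\substack{t\in(\mathcal O_L/p^k\mathcal O_L)^\times\\ \mathrm{Nm}(t)\equiv mn\ (p^k)}}\xi(t)\,e_{p^k}(-\mathrm{Tr}(t))$$ if $k\ge\kappa$ and $p\nmid mn$, and $H(m,n;p^k)=0$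 otherwise. For a Dirichlet character $\psi$ mod $p^k$ and integers $a_1,a_2,a_3$, $$\widehat H(\psi,a_1,a_2,a_3)=p^{-2k}\sum_{u,x_1,x_2,x_3\bmod p^k}\overline\psi(u)H(\overline u x_1x_2x_3,1;p^k)\,e_{p^k}(a_1x_1+a_2x_2+a_3x_3-ua_1a_2a_3).$$ Here $e_q(x)=\exp(2\pi i x/q)$ (extended $p$-adically), $\overline u$ is the inverse mod $p^k$, and Dirichlet characters vanish on non-units. *)

theory Defs
  imports "HOL-Analysis.Analysis" "HOL-Number_Theory.Number_Theory"
begin

text \<open>
  The quadratic extension L of Q_p is Q_p(sqrt D), where the
  integer D is either a p-adic unit that is a non-square mod p (L unramified) or exactly
  divisible by p (L ramified).  Then O_L = Z_p[sqrt D].  An element a + b sqrt D of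
  Z[sqrt D] (dense in O_L, and generating a dense subgroup Q(sqrt D)^* of L^*) is
  represented by the pair (a, b).
\<close>

type_synonym zsq = "int \<times> int"

definition zmul :: "int \<Rightarrow> zsq \<Rightarrow> zsq \<Rightarrow> zsq" where
  "zmul D x y = (fst x * fst y + D * snd x * snd y, fst x * snd y + snd x * fst y)"

definition nrm :: "int \<Rightarrow> zsq \<Rightarrow> int" where
  "nrm D x = (fst x)^2 - D * (snd x)^2"

definition trc :: "zsq \<Rightarrow> int" where
  "trc x = 2 * fst x"

definition gal :: "zsq \<Rightarrow> zsq" where
  "gal x = (fst x, - snd x)"

definition quad_param :: "nat \<Rightarrow> int \<Rightarrow> bool" where
  "quad_param p D \<longleftrightarrow>
     (\<not> int p dvd D \<and> \<not> QuadRes (int p) D) \<or> (int p dvd D \<and> \<not> (int p)^2 dvd D)"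

definition ram_index :: "nat \<Rightarrow> int \<Rightarrow> nat" where
  "ram_index p D = (if int p dvd D then 2 else 1)"

text \<open>d = v_p of the discriminant of O_L = Z_p[sqrt D] (discriminant 4D).\<close>
definition disc_exp :: "nat \<Rightarrow> int \<Rightarrow> nat" where
  "disc_exp p D = multiplicity (int p) (4 * D)"

definition vL :: "nat \<Rightarrow> int \<Rightarrow> zsq \<Rightarrow> nat" where
  "vL p D x = (ram_index p D * multiplicity (int p) (nrm D x)) div 2"

text \<open>Membership of a nonzero element of Z[sqrt D] in U_L^c = 1 + varpi^c O_L
  (with U_L^0 = O_L^*).\<close>
definition in_U :: "nat \<Rightarrow> int \<Rightarrow> nat \<Rightarrow> zsq \<Rightarrow> bool" where
  "in_U p D c x \<longleftrightarrow> x \<noteq> (0, 0) \<and>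
     (if c = 0 then vL p D x = 0
      else (x = (1, 0) \<or> c \<le> vL p D (fst x - 1, snd x)))"

text \<open>A smooth (locally constant) character of L^*, given by its restriction to the
  nonzero elements of Z[sqrt D] (this determines it uniquely).\<close>
definition smooth_char :: "nat \<Rightarrow> int \<Rightarrow> (zsq \<Rightarrow> complex) \<Rightarrow> bool" where
  "smooth_char p D \<xi> \<longleftrightarrow>
     (\<forall>x y. x \<noteq> (0, 0) \<longrightarrow> y \<noteq> (0, 0) \<longrightarrow> \<xi> (zmul D x y) = \<xi> x * \<xi> y) \<and>
     (\<forall>x. x \<noteq> (0, 0) \<longrightarrow> \<xi> x \<noteq> 0) \<and>
     (\<exists>c. \<forall>x. in_U p D c x \<longrightarrow> \<xi> x = 1)"

definition conductor :: "nat \<Rightarrow> int \<Rightarrow> (zsq \<Rightarrow> complex) \<Rightarrow> nat" where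
  "conductor p D \<xi> = (LEAST c. \<forall>x. in_U p D c x \<longrightarrow> \<xi> x = 1)"

text \<open>eta_L: the nontrivial (smooth) character of Q_p^* trivial on Nm(L^*), given by its
  restriction to the nonzero integers.\<close>
definition is_eta_L :: "nat \<Rightarrow> int \<Rightarrow> (int \<Rightarrow> complex) \<Rightarrow> bool" where
  "is_eta_L p D \<eta> \<longleftrightarrow>
     (\<forall>m n. m \<noteq> 0 \<longrightarrow> n \<noteq> 0 \<longrightarrow> \<eta> (m * n) = \<eta> m * \<eta> n) \<and>
     (\<forall>n. n \<noteq> 0 \<longrightarrow> \<eta> n \<noteq> 0) \<and>
     (\<exists>N. \<forall>n. n \<noteq> 0 \<longrightarrow> [n = 1] (mod (int p ^ N)) \<longrightarrow> \<eta> n = 1) \<and>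
     (\<forall>z. z \<noteq> (0, 0) \<longrightarrow> \<eta> (nrm D z) = 1) \<and>
     (\<exists>n. n \<noteq> 0 \<and> \<eta> n \<noteq> 1)"

definition dirichlet_char :: "nat \<Rightarrow> (int \<Rightarrow> complex) \<Rightarrow> bool" where
  "dirichlet_char q \<psi> \<longleftrightarrow>
     (\<forall>a. \<psi> (a + int q) = \<psi> a) \<and>
     (\<forall>a b. \<psi> (a * b) = \<psi> a * \<psi> b) \<and>
     \<psi> 1 = 1 \<and>
     (\<forall>a. \<not> coprime a (int q) \<longrightarrow> \<psi> a = 0)"

definition ep :: "nat \<Rightarrow> int \<Rightarrow> complex" where
  "ep q x = cis (2 * pi * real_of_int x / real q)"

text \<open>Inverse modulo q (arbitrary, namely 0, on non-units).\<close>
definition inv_mod :: "nat \<Rightarrow> int \<Rightarrow> int" where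
  "inv_mod q u = (if coprime u (int q) then (SOME v. [u * v = 1] (mod int q)) else 0)"

definition c0 :: "nat \<Rightarrow> int \<Rightarrow> (zsq \<Rightarrow> complex) \<Rightarrow> nat" where
  "c0 p D \<xi> = conductor p D \<xi> div ram_index p D"

definition kappa :: "nat \<Rightarrow> int \<Rightarrow> (zsq \<Rightarrow> complex) \<Rightarrow> nat" where
  "kappa p D \<xi> = (if int p dvd D then c0 p D \<xi> + 1 else c0 p D \<xi>)"

definition zunit :: "nat \<Rightarrow> int \<Rightarrow> nat \<Rightarrow> zsq \<Rightarrow> bool" where
  "zunit p D k t \<longleftrightarrow> (\<exists>s. [fst (zmul D t s) = 1] (mod int p ^ k) \<and> [snd (zmul D t s) = 0] (mod int p ^ k))"

text \<open>The function H(m, n; p^k).  Residues of O_L/p^k O_L are represented by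
  a + b sqrt D with 0 <= a, b < p^k.\<close>
definition Hfun :: "nat \<Rightarrow> int \<Rightarrow> (zsq \<Rightarrow> complex) \<Rightarrow> complex \<Rightarrow> int \<Rightarrow> int \<Rightarrow> nat \<Rightarrow> complex" where
  "Hfun p D \<xi> \<gamma> m n k =
     (if kappa p D \<xi> \<le> k \<and> \<not> int p dvd (m * n) then
        cnj \<gamma> * complex_of_real (real p powr (- real (disc_exp p D) / 2)) *
        (\<Sum>t \<in> {t \<in> {0..<int p ^ k} \<times> {0..<int p ^ k}.
                  zunit p D k t \<and> [nrm D t = m * n] (mod int p ^ k)}.
            \<xi> t * ep (p ^ k) (- trc t))
      else 0)"

definition Hhat :: "nat \<Rightarrow> int \<Rightarrow> (zsq \<Rightarrow> complex) \<Rightarrow> complex \<Rightarrow> nat \<Rightarrow> (int \<Rightarrow> complex)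
                    \<Rightarrow> int \<Rightarrow> int \<Rightarrow> int \<Rightarrow> complex" where
  "Hhat p D \<xi> \<gamma> k \<psi> a1 a2 a3 =
     complex_of_real (real p powr (- 2 * real k)) *
     (\<Sum>u \<in> {0..<int p ^ k}. \<Sum>x1 \<in> {0..<int p ^ k}. \<Sum>x2 \<in> {0..<int p ^ k}. \<Sum>x3 \<in> {0..<int p ^ k}.
        cnj (\<psi> u) * Hfun p D \<xi> \<gamma> (inv_mod (p ^ k) u * x1 * x2 * x3) 1 k *
        ep (p ^ k) (a1 * x1 + a2 * x2 + a3 * x3 - u * a1 * a2 * a3))"

end

theory Submission
  imports Defs
begin


lemma ep_cong:
  assumes "[x = y] (mod int q)"
  shows "ep q x = ep q y"
proof (cases "q = 0")
  case True
  then show ?thesis using assms by (simp add: cong_def)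
next
  case False
  from assms obtain n where n: "x - y = int q * n"
    by (auto simp: cong_iff_dvd_diff dvd_def)
  have "x = y + int q * n" using n by simp
  then have "2 * pi * real_of_int x / real q = 2 * pi * real_of_int y / real q + 2 * pi * real_of_int n"
    using False by (simp add: field_simps)
  then have "ep q x = cis (2 * pi * real_of_int y / real q + 2 * pi * real_of_int n)"
    by (simp add: ep_def)
  also have "\<dots> = cis (2 * pi * real_of_int y / real q) * cis (2 * pi * real_of_int n)"
    by (rule cis_mult[symmetric])
  also have "cis (2 * pi * real_of_int n) = 1" by (rule cis_multiple_2pi) simp
  finally show ?thesis by (simp add: ep_def)
qed

lemma ep_add: "ep q (x + y) = ep q x * ep q y"
  by (simp add: ep_def cis_mult distrib_left add_divide_distrib)

lemma ep_scale:
  assumes "0 < p"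
  shows "ep (p * N) (int p * z) = ep N z"
  using assms by (simp add: ep_def mult.assoc)

lemma shift_sum:
  fixes F :: "int \<Rightarrow> complex"
  assumes Q: "0 < Q" and per: "\<And>x y. [x = y] (mod Q) \<Longrightarrow> F x = F y"
  shows "(\<Sum>y\<in>{0..<Q}. F (y + c)) = (\<Sum>y\<in>{0..<Q}. F y)"
proof -
  have "(\<Sum>y\<in>{0..<Q}. F (y + c)) = (\<Sum>y\<in>{0..<Q}. F ((y + c) mod Q))"
    by (intro sum.cong refl per) (simp add: cong_def)
  also have "\<dots> = (\<Sum>y\<in>{0..<Q}. F y)"
  proof (rule sum.reindex_bij_witness[where i = "\<lambda>z. (z - c) mod Q" and j = "\<lambda>y. (y + c) mod Q"])
    fix a assume "a \<in> {0..<Q}"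
    then show "((a + c) mod Q - c) mod Q = a" 
      by (metis add_diff_cancel_right' atLeastLessThan_iff mod_diff_left_eq mod_pos_pos_trivial)
  next
    fix a assume "a \<in> {0..<Q}"
    then show "(a + c) mod Q \<in> {0..<Q}" using Q by simp
  next
    fix b assume "b \<in> {0..<Q}"
    then show "((b - c) mod Q + c) mod Q = b"
      by (metis atLeastLessThan_iff diff_add_cancel mod_add_left_eq mod_pos_pos_trivial)
  next
    fix b assume "b \<in> {0..<Q}"
    then show "(b - c) mod Q \<in> {0..<Q}" using Q by simp
  qed simp
  finally show ?thesis .
qed

lemma ep_nontriv:
  assumes p: "3 \<le> p" and P: "0 < P"
  shows "ep (p * P) (- (2 * int P)) \<noteq> 1"
proof
  assume h: "ep (p * P) (- (2 * int P)) = 1"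
  have "2 * pi * real_of_int (- (2 * int P)) / real (p * P) = - (4 * pi / real p)"
    using P p by (simp add: field_simps)
  with h have "cis (- (4 * pi / real p)) = 1" by (simp add: ep_def)
  then have "cos (- (4 * pi / real p)) = 1"
    by (metis Re_complex_of_real cis.sel(1) one_complex.sel(1))
  then obtain x where x: "- (4 * pi / real p) = real_of_int x * 2 * pi"
    using cos_one_2pi_int by blast
  then have "(- 2) * (2 * pi) = (real_of_int x * real p) * (2 * pi)" using p by (simp add: field_simps)
  then have "- 2 = real_of_int x * real p" by (subst (asm) mult_right_cancel) simp_all
  then have "- 2 = x * int p" by (metis of_int_eq_iff of_int_mult of_int_of_nat_eq of_int_minus of_int_numeral)
  moreover have "x \<noteq> 0" using calculation by auto
  then have h1: "\<bar>x\<bar> * int p \<ge> 1 * int p" by (intro mult_right_mono) auto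
  have h2: "\<bar>x * int p\<bar> = \<bar>x\<bar> * int p" by (simp add: abs_mult)
  ultimately show False using p h1 h2 by linarith
qed

lemma sum1D:
  fixes f :: "int \<Rightarrow> complex"
  assumes p: "3 \<le> p" and P: "0 < P"
    and per: "\<And>x y. [x = y] (mod int P) \<Longrightarrow> f x = f y"
  shows "(\<Sum>y\<in>{0..<int (p * P)}. f y * ep (p * P) (- (2 * y))) = 0"
proof -
  define F where "F y = f y * ep (p * P) (- (2 * y))" for y
  define S where "S = (\<Sum>y\<in>{0..<int (p * P)}. F y)"
  have perF: "F x = F y" if "[x = y] (mod int (p * P))" for x y
  proof -
    have "[x = y] (mod int P)" using that
      by (metis cong_dvd_modulus dvd_triv_right of_nat_mult)
    then have "f x = f y" by (rule per)
    moreover have "[- (2 * x) = - (2 * y)] (mod int (p * P))"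
      using that by (intro cong_minus_minus_iff[THEN iffD2] cong_mult) auto
    ultimately show ?thesis unfolding F_def using ep_cong by metis
  qed
  have "S = (\<Sum>y\<in>{0..<int (p * P)}. F (y + int P))"
    unfolding S_def using p P by (intro shift_sum[symmetric] perF) auto
  also have "\<dots> = (\<Sum>y\<in>{0..<int (p * P)}. F y * ep (p * P) (- (2 * int P)))"
  proof (intro sum.cong refl)
    fix y
    have "f (y + int P) = f y" by (intro per) (simp add: cong_def)
    moreover have "- (2 * (y + int P)) = - (2 * y) + - (2 * int P)" by simp
    ultimately show "F (y + int P) = F y * ep (p * P) (- (2 * int P))"
      unfolding F_def by (simp only: ep_add mult.assoc)
  qed
  also have "\<dots> = S * ep (p * P) (- (2 * int P))" unfolding S_def by (simp add: sum_distrib_right)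
  finally have "S * (1 - ep (p * P) (- (2 * int P))) = 0" by (simp add: algebra_simps)
  then have "S = 0" using ep_nontriv[OF p P] by simp
  then show ?thesis unfolding S_def F_def .
qed



lemma cong_dvd_iff':
  fixes a b m d :: int
  assumes "[a = b] (mod m)" "d dvd m"
  shows "d dvd a \<longleftrightarrow> d dvd b"
proof -
  have "d dvd a - b" using assms by (meson cong_iff_dvd_diff dvd_trans)
  then show ?thesis by (metis diff_add_cancel dvd_add_right_iff)
qed

lemma nrm_zmul: "nrm D (zmul D x y) = nrm D x * nrm D y"
  by (simp add: nrm_def zmul_def power2_eq_square algebra_simps)

lemma nrm_cong:
  assumes "[fst t = fst t'] (mod m)" "[snd t = snd t'] (mod m)"
  shows "[nrm D t = nrm D t'] (mod m)"
  unfolding nrm_def using assms by (intro cong_diff cong_mult cong_pow cong_refl)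

lemma nz_of_nrm:
  assumes "\<not> int p dvd nrm D z" shows "z \<noteq> (0, 0)"
  using assms by (auto simp: nrm_def)

lemma nonsq:
  assumes p: "prime p" and qp: "quad_param p D" and z: "nrm D z = 0"
  shows "z = (0, 0)"
proof (rule ccontr)
  assume nz: "z \<noteq> (0, 0)"
  obtain a b where ab: "z = (a, b)" by (cases z)
  have eq: "a^2 = D * b^2" using z ab by (simp add: nrm_def)
  have b0: "b \<noteq> 0" using eq nz ab by auto
  then have g0: "gcd a b \<noteq> 0" by simp
  from gcd_coprime_exists[OF g0] obtain a' b' where
    a': "a = a' * gcd a b" and b': "b = b' * gcd a b" and cp: "coprime a' b'" by blast
  have "(a' ^ 2) * (gcd a b)^2 = (D * b' ^ 2) * (gcd a b)^2"
    using eq a' b' by (metis power_mult_distrib mult.assoc)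
  then have eq': "a' ^ 2 = D * b' ^ 2" using g0 b0 by auto
  have "b' ^ 2 dvd a' ^ 2" using eq' by simp
  moreover have "coprime (a' ^ 2) (b' ^ 2)" using cp by simp
  ultimately have "is_unit (b' ^ 2)"
    by (metis coprime_common_divisor dvd_refl)
  then have "b' ^ 2 = 1" by (simp add: zero_le_power2 pos_zmult_eq_1_iff_lemma is_unit_power_iff)
  then have Dsq: "D = a' ^ 2" using eq' by simp
  show False
  proof (cases "int p dvd D")
    case False
    with qp have "\<not> QuadRes (int p) D" by (auto simp: quad_param_def)
    moreover have "QuadRes (int p) D" unfolding QuadRes_def using Dsq by (auto intro: cong_refl)
    ultimately show False by simp
  next
    case True
    with qp have nd: "\<not> (int p)^2 dvd D" by (auto simp: quad_param_def)
    have pp: "prime (int p)" using p by simp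
    have "int p dvd a' ^ 2" using True Dsq by simp
    then have "int p dvd a'" using pp prime_dvd_power by blast
    then have "(int p)^2 dvd a'^2" by simp
    then show False using nd Dsq by simp
  qed
qed

lemma zunit_of:
  assumes p: "prime p" and n: "\<not> int p dvd nrm D t"
  shows "zunit p D k t"
proof -
  have "coprime (nrm D t) (int p ^ k)" using p n by (intro prime_imp_power_coprime) auto
  then obtain M where M: "[nrm D t * M = 1] (mod int p ^ k)" using cong_solve_coprime_int by blast
  have "zmul D t (M * fst t, - M * snd t) = (nrm D t * M, 0)"
    by (simp add: zmul_def nrm_def power2_eq_square algebra_simps)
  then show ?thesis unfolding zunit_def using M by (intro exI[of _ "(M * fst t, - M * snd t)"]) (simp add: cong_refl)
qed

lemma vL_bound:
  assumes p: "prime p" and qp: "quad_param p D" and y: "y \<noteq> (0, 0)"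
    and d1: "int p ^ j dvd fst y" and d2: "int p ^ j dvd snd y"
  shows "ram_index p D * j \<le> vL p D y"
proof -
  obtain a where a: "fst y = int p ^ j * a" using d1 by (auto simp: dvd_def)
  obtain b where b: "snd y = int p ^ j * b" using d2 by (auto simp: dvd_def)
  have "(a, b) \<noteq> (0, 0)" using y a b by (cases y) auto
  then have n0: "nrm D (a, b) \<noteq> 0" using nonsq[OF p qp] by blast
  have ny: "nrm D y = int p ^ (2 * j) * nrm D (a, b)"
  proof -
    have "nrm D y = (int p ^ j)^2 * nrm D (a, b)"
      using a b by (simp add: nrm_def power_mult_distrib right_diff_distrib)
    then show ?thesis by (simp add: power_mult[symmetric] mult.commute)
  qed
  have pu: "\<not> is_unit (int p)" proof -
    have "prime (int p)" using p by simp
    then show ?thesis using not_prime_unit by blast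
  qed
  have "2 * j \<le> multiplicity (int p) (nrm D y)"
    using n0 ny p pu by (subst power_dvd_iff_le_multiplicity[symmetric]) auto
  then have "ram_index p D * (2 * j) \<le> ram_index p D * multiplicity (int p) (nrm D y)" by simp
  then have "ram_index p D * (2 * j) div 2 \<le> vL p D y" unfolding vL_def by (rule div_le_mono)
  then show ?thesis by simp
qed

lemma xi_triv:
  assumes "smooth_char p D \<xi>" "in_U p D (conductor p D \<xi>) x"
  shows "\<xi> x = 1"
proof -
  from assms(1) obtain c where "\<forall>x. in_U p D c x \<longrightarrow> \<xi> x = 1" by (auto simp: smooth_char_def)
  then have "\<forall>x. in_U p D (conductor p D \<xi>) x \<longrightarrow> \<xi> x = 1"
    unfolding conductor_def by (rule LeastI)
  with assms(2) show ?thesis by blast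
qed

lemma inU_of_cong:
  assumes p: "prime p" and qp: "quad_param p D" and j: "1 \<le> j" and c: "c \<le> ram_index p D * j" "0 < c"
    and c1: "[fst x = 1] (mod int p ^ j)" and c2: "[snd x = 0] (mod int p ^ j)"
  shows "in_U p D c x"
proof -
  have pj: "int p dvd int p ^ j" using j by (simp add: dvd_power)
  have pu: "\<not> int p dvd 1" proof -
    have "prime (int p)" using p by simp
    then show ?thesis using not_prime_unit by blast
  qed
  have x0: "x \<noteq> (0, 0)"
  proof
    assume "x = (0, 0)"
    then have "int p ^ j dvd 0 - 1" using c1 by (simp add: cong_iff_dvd_diff)
    then have "int p dvd 1" using pj by (metis dvd_minus_iff dvd_trans diff_0)
    then show False using pu by simp
  qed
  have d1: "int p ^ j dvd fst (fst x - 1, snd x)" using c1 by (simp add: cong_iff_dvd_diff)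
  have d2: "int p ^ j dvd snd (fst x - 1, snd x)" using c2 by (simp add: cong_0_iff)
  show ?thesis
  proof (cases "x = (1, 0)")
    case True then show ?thesis using x0 c by (simp add: in_U_def)
  next
    case False
    then have "(fst x - 1, snd x) \<noteq> (0, 0)" by (cases x) auto
    from vL_bound[OF p qp this d1 d2] c show ?thesis using x0 False by (simp add: in_U_def)
  qed
qed

lemma xi_mult:
  assumes "smooth_char p D \<xi>" "\<not> int p dvd nrm D x" "\<not> int p dvd nrm D y"
  shows "\<xi> (zmul D x y) = \<xi> x * \<xi> y"
proof -
  have "x \<noteq> (0, 0)" "y \<noteq> (0, 0)" using assms(2,3) nz_of_nrm by blast+
  then show ?thesis using assms(1) unfolding smooth_char_def by blast
qed

lemma xi_nz:
  assumes "smooth_char p D \<xi>" "\<not> int p dvd nrm D x"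
  shows "\<xi> x \<noteq> 0"
proof -
  have "x \<noteq> (0, 0)" using assms(2) nz_of_nrm by blast
  then show ?thesis using assms(1) unfolding smooth_char_def by blast
qed

lemma xi_cong:
  assumes p: "prime p" and qp: "quad_param p D" and sc: "smooth_char p D \<xi>"
    and j: "1 \<le> j" and c: "conductor p D \<xi> \<le> ram_index p D * j" "0 < conductor p D \<xi>"
    and n: "\<not> int p dvd nrm D t"
    and t1: "[fst t' = fst t] (mod int p ^ j)" and t2: "[snd t' = snd t] (mod int p ^ j)"
  shows "\<xi> t' = \<xi> t"
proof -
  define P where "P = int p ^ j"
  define N where "N = nrm D t"
  have pp: "prime (int p)" using p by simp
  have pj: "int p dvd P" using j by (simp add: P_def dvd_power)
  have "coprime N P" unfolding P_def N_def using pp n by (intro prime_imp_power_coprime) auto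
  then obtain M where M: "[N * M = 1] (mod P)" using cong_solve_coprime_int by blast
  have pM: "\<not> int p dvd M"
  proof
    assume "int p dvd M"
    then have "int p dvd N * M" by simp
    then have "int p dvd 1" using cong_dvd_iff'[OF M pj] by simp
    then show False using pp by (simp add: prime_int_iff)
  qed
  define m where "m = (M, 0::int)"
  define g where "g = gal t"
  have nm: "\<not> int p dvd nrm D m" using pM pp unfolding m_def nrm_def by (simp add: prime_dvd_power_iff)
  have ng: "\<not> int p dvd nrm D g" using n unfolding g_def by (simp add: nrm_def gal_def)
  have "[nrm D t' = nrm D t] (mod P)" unfolding P_def by (rule nrm_cong[OF t1 t2])
  then have nt': "\<not> int p dvd nrm D t'" using n cong_dvd_iff' pj by blast
  have nt'g: "\<not> int p dvd nrm D (zmul D t' g)" using nt' ng pp by (simp add: nrm_zmul prime_dvd_mult_iff)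
  have ntg: "\<not> int p dvd nrm D (zmul D t g)" using n ng pp by (simp add: nrm_zmul prime_dvd_mult_iff)
  have tg: "zmul D t g = (N, 0)" unfolding g_def N_def by (simp add: zmul_def gal_def nrm_def power2_eq_square)
  have t1': "[fst t' = fst t] (mod P)" and t2': "[snd t' = snd t] (mod P)" using t1 t2 P_def by auto
  have "[fst t' * fst t + D * snd t' * (- snd t) = fst t * fst t + D * snd t * (- snd t)] (mod P)"
    by (intro cong_add cong_mult cong_refl t1' t2')
  then have cf: "[fst (zmul D t' g) = fst (zmul D t g)] (mod P)"
    by (simp add: zmul_def g_def gal_def)
  have "[fst t' * (- snd t) + snd t' * fst t = fst t * (- snd t) + snd t * fst t] (mod P)"
    by (intro cong_add cong_mult cong_refl t1' t2')
  then have cs: "[snd (zmul D t' g) = snd (zmul D t g)] (mod P)"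
    by (simp add: zmul_def g_def gal_def)
  define A where "A = zmul D m (zmul D t' g)"
  define B where "B = zmul D m (zmul D t g)"
  have fA: "fst A = M * fst (zmul D t' g)" "snd A = M * snd (zmul D t' g)"
    unfolding A_def m_def by (simp_all add: zmul_def)
  have fB: "fst B = M * N" "snd B = 0" unfolding B_def m_def tg by (simp_all add: zmul_def)
  have "[fst A = M * N] (mod P)" unfolding fA using cf tg by (simp add: cong_scalar_left)
  then have A1: "[fst A = 1] (mod P)" using M by (metis cong_trans mult.commute)
  have A2: "[snd A = 0] (mod P)" unfolding fA using cs tg
    by (metis cong_scalar_left mult_zero_right snd_conv)
  have B1: "[fst B = 1] (mod P)" using M by (simp add: fB mult.commute)
  have B2: "[snd B = 0] (mod P)" by (simp add: fB)
  have "\<xi> A = 1" using inU_of_cong[OF p qp j c A1[unfolded P_def] A2[unfolded P_def]] xi_triv[OF sc] by blast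
  moreover have "\<xi> B = 1" using inU_of_cong[OF p qp j c B1[unfolded P_def] B2[unfolded P_def]] xi_triv[OF sc] by blast
  moreover have "\<xi> A = \<xi> m * (\<xi> t' * \<xi> g)"
    unfolding A_def using xi_mult[OF sc] nm nt'g nt' ng by simp
  moreover have "\<xi> B = \<xi> m * (\<xi> t * \<xi> g)"
    unfolding B_def using xi_mult[OF sc] nm ntg n ng by simp
  ultimately have "\<xi> m * \<xi> g * \<xi> t' = \<xi> m * \<xi> g * \<xi> t" by (simp add: algebra_simps)
  moreover have "\<xi> m * \<xi> g \<noteq> 0" using xi_nz[OF sc] nm ng by simp
  ultimately show ?thesis by simp
qed


lemma KL:
  assumes p: "prime p" and odd: "odd p" and qp: "quad_param p D" and sc: "smooth_char p D \<xi>"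
    and e: "ram_index p D dvd conductor p D \<xi>" and c: "0 < conductor p D \<xi>"
    and k: "c0 p D \<xi> + 1 \<le> k" and a: "int p dvd a"
  shows "(\<Sum>x\<in>{0..<int p ^ k}. Hfun p D \<xi> \<gamma> (v * x) 1 k * ep (p ^ k) (a * x)) = 0"
proof -
  have pp: "prime (int p)" using p by simp
  have p3: "3 \<le> p"
  proof -
    have "2 \<le> p" using p by (rule prime_ge_2_nat)
    moreover have "p \<noteq> 2" using odd by auto
    ultimately show ?thesis by linarith
  qed
  have epos: "0 < ram_index p D" by (simp add: ram_index_def)
  obtain c0' where c0': "conductor p D \<xi> = ram_index p D * c0'" using e by (auto simp: dvd_def)
  have c0eq: "c0 p D \<xi> = c0'" unfolding c0_def c0' using epos by simp
  have c0pos: "1 \<le> c0'" using c c0' by (cases c0') auto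
  define j where "j = k - 1"
  have kj: "k = Suc j" and j1: "1 \<le> j" using k c0eq c0pos by (auto simp: j_def)
  have cj: "conductor p D \<xi> \<le> ram_index p D * j" proof -
    have "c0' \<le> j" using k c0eq j_def by simp
    then show ?thesis using c0' by simp
  qed
  have kap: "kappa p D \<xi> \<le> k" using k by (simp add: kappa_def)
  define Q where "Q = int p ^ k"
  define P where "P = p ^ j"
  have QP: "Q = int (p * P)" and kP: "p ^ k = p * P" by (simp_all add: Q_def P_def kj)
  have Qpos: "0 < Q" using p by (simp add: Q_def prime_gt_0_nat)
  have pQ: "int p dvd Q" by (simp add: Q_def kj)
  have PQ: "int P dvd Q" by (simp add: QP)
  have PP: "int P = int p ^ j" by (simp add: P_def)
  have Ppos: "0 < P" using p by (simp add: P_def prime_gt_0_nat)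
  have pP: "int p dvd int P" using j1 by (simp add: PP dvd_power)
  define B where "B = {0..<Q} \<times> {0..<Q}"
  have finB: "finite B" by (simp add: B_def)
  define C where "C = cnj \<gamma> * complex_of_real (real p powr (- real (disc_exp p D) / 2))"
  define E where "E t = \<xi> t * ep (p ^ k) (- trc t)" for t
  have H: "Hfun p D \<xi> \<gamma> m 1 k = (if \<not> int p dvd m then C * (\<Sum>t\<in>B. if zunit p D k t \<and> [nrm D t = m] (mod Q) then E t else 0) else 0)" for m
    unfolding Hfun_def E_def B_def Q_def C_def using kap by (simp add: sum.inter_filter)
  show ?thesis
  proof (cases "int p dvd v")
    case True
    then have "\<And>x. int p dvd v * x" by simp
    then show ?thesis by (simp add: H)
  next
    case False
    have "coprime v Q" unfolding Q_def using pp False by (intro prime_imp_power_coprime) auto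
    then obtain v' where v': "[v * v' = 1] (mod Q)" using cong_solve_coprime_int by blast
    define x0 where "x0 t = (nrm D t * v') mod Q" for t
    have x0r: "x0 t \<in> {0..<Q}" for t using Qpos by (simp add: x0_def)
    have key: "(\<not> int p dvd v * x \<and> zunit p D k t \<and> [nrm D t = v * x] (mod Q)) \<longleftrightarrow> (\<not> int p dvd nrm D t \<and> x = x0 t)"
      if x: "x \<in> {0..<Q}" for x t
    proof
      assume h: "\<not> int p dvd v * x \<and> zunit p D k t \<and> [nrm D t = v * x] (mod Q)"
      then have n: "\<not> int p dvd nrm D t" using cong_dvd_iff'[OF _ pQ] by blast
      have "[nrm D t * v' = v * v' * x] (mod Q)" using h by (metis cong_scalar_right mult.assoc mult.commute)
      also have "[v * v' * x = 1 * x] (mod Q)" using v' by (rule cong_scalar_right)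
      finally have "x0 t = x mod Q" by (simp add: x0_def cong_def)
      also have "\<dots> = x" using x by simp
      finally show "\<not> int p dvd nrm D t \<and> x = x0 t" using n by simp
    next
      assume h: "\<not> int p dvd nrm D t \<and> x = x0 t"
      have "[v * x = v * (nrm D t * v')] (mod Q)" using h by (simp add: x0_def cong_def mod_mult_right_eq)
      also have "[v * (nrm D t * v') = nrm D t * (v * v')] (mod Q)" by (simp add: algebra_simps)
      also have "[nrm D t * (v * v') = nrm D t * 1] (mod Q)" using v' by (rule cong_scalar_left)
      finally have cg: "[v * x = nrm D t] (mod Q)" by simp
      then have "\<not> int p dvd v * x" using h cong_dvd_iff'[OF cg pQ] by blast
      then show "\<not> int p dvd v * x \<and> zunit p D k t \<and> [nrm D t = v * x] (mod Q)"
        using h zunit_of[OF p] cg by (simp add: cong_sym)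
    qed
    define G where "G t = (if \<not> int p dvd nrm D t then \<xi> t * ep (p ^ k) (a * x0 t) else 0)" for t
    have "(\<Sum>x\<in>{0..<Q}. Hfun p D \<xi> \<gamma> (v * x) 1 k * ep (p ^ k) (a * x))
        = (\<Sum>x\<in>{0..<Q}. \<Sum>t\<in>B. if \<not> int p dvd v * x \<and> zunit p D k t \<and> [nrm D t = v * x] (mod Q) then C * E t * ep (p ^ k) (a * x) else 0)"
      by (intro sum.cong refl) (auto simp: H sum_distrib_left sum_distrib_right intro!: sum.cong)
    also have "\<dots> = (\<Sum>t\<in>B. \<Sum>x\<in>{0..<Q}. if x = x0 t then (if \<not> int p dvd nrm D t then C * E t * ep (p ^ k) (a * x) else 0) else 0)"
      by (subst sum.swap) (intro sum.cong refl, auto simp: key)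
    also have "\<dots> = (\<Sum>t\<in>B. C * (G t * ep (p ^ k) (- (2 * fst t))))"
    proof (intro sum.cong refl)
      fix t
      have "0 \<le> x0 t" "x0 t < Q" using x0r[of t] by auto
      then show "(\<Sum>x\<in>{0..<Q}. if x = x0 t then (if \<not> int p dvd nrm D t then C * E t * ep (p ^ k) (a * x) else 0) else 0) = C * (G t * ep (p ^ k) (- (2 * fst t)))"
        by (simp add: G_def E_def trc_def)
    qed
    also have "\<dots> = C * (\<Sum>t2\<in>{0..<Q}. \<Sum>t1\<in>{0..<Q}. G (t1, t2) * ep (p ^ k) (- (2 * t1)))"
    proof -
      have "(\<Sum>t\<in>B. C * (G t * ep (p ^ k) (- (2 * fst t)))) = C * (\<Sum>t\<in>B. G t * ep (p ^ k) (- (2 * fst t)))"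
        by (simp add: sum_distrib_left)
      also have "(\<Sum>t\<in>B. G t * ep (p ^ k) (- (2 * fst t))) = (\<Sum>t1\<in>{0..<Q}. \<Sum>t2\<in>{0..<Q}. G (t1, t2) * ep (p ^ k) (- (2 * t1)))"
        unfolding B_def by (rule sum.cartesian_product'[THEN trans]) simp
      also have "\<dots> = (\<Sum>t2\<in>{0..<Q}. \<Sum>t1\<in>{0..<Q}. G (t1, t2) * ep (p ^ k) (- (2 * t1)))"
        by (rule sum.swap)
      finally show ?thesis .
    qed
    also have "\<dots> = 0"
    proof -
      have "(\<Sum>t1\<in>{0..<Q}. G (t1, t2) * ep (p ^ k) (- (2 * t1))) = 0" for t2
        unfolding QP kP
      proof (rule sum1D[OF p3 Ppos])
        fix y y' :: int assume yy: "[y = y'] (mod int P)"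
        have c1: "[fst (y', t2) = fst (y, t2)] (mod int p ^ j)" using yy PP by (simp add: cong_sym)
        have c2: "[snd (y', t2) = snd (y, t2)] (mod int p ^ j)" by simp
        have nc: "[nrm D (y', t2) = nrm D (y, t2)] (mod int P)" using nrm_cong[OF c1 c2] PP by simp
        show "G (y, t2) = G (y', t2)"
        proof (cases "int p dvd nrm D (y, t2)")
          case True
          then have "int p dvd nrm D (y', t2)" using cong_dvd_iff'[OF nc pP] by blast
          then show ?thesis using True by (simp add: G_def)
        next
          case nd: False
          then have nd': "\<not> int p dvd nrm D (y', t2)" using cong_dvd_iff'[OF nc pP] by blast
          have xe: "\<xi> (y', t2) = \<xi> (y, t2)" by (rule xi_cong[OF p qp sc j1 cj c nd c1 c2])
          obtain a' where a': "a = int p * a'" using a by (auto simp: dvd_def)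
          have "[x0 (y', t2) = nrm D (y', t2) * v'] (mod int P)"
            using PQ by (metis cong_dvd_modulus cong_mod_left cong_refl x0_def)
          moreover have "[x0 (y, t2) = nrm D (y, t2) * v'] (mod int P)"
            using PQ by (metis cong_dvd_modulus cong_mod_left cong_refl x0_def)
          ultimately have "[x0 (y', t2) = x0 (y, t2)] (mod int P)"
            using nc by (meson cong_scalar_right cong_sym cong_trans)
          then have "[a' * x0 (y', t2) = a' * x0 (y, t2)] (mod int P)" by (rule cong_scalar_left)
          then have "ep P (a' * x0 (y', t2)) = ep P (a' * x0 (y, t2))" by (rule ep_cong)
          then have "ep (p * P) (int p * (a' * x0 (y', t2))) = ep (p * P) (int p * (a' * x0 (y, t2)))"
            using p by (simp add: ep_scale prime_gt_0_nat)
          then have "ep (p ^ k) (a * x0 (y', t2)) = ep (p ^ k) (a * x0 (y, t2))"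
            by (simp add: a' kP mult.assoc)
          then show ?thesis using nd nd' xe by (simp add: G_def)
        qed
      qed
      then show ?thesis by simp
    qed
    finally show ?thesis by (simp add: Q_def)
  qed
qed

theorem lemma5p2:
  fixes p :: nat and D :: int and \<xi> :: "int \<times> int \<Rightarrow> complex" and \<eta> :: "int \<Rightarrow> complex"
    and \<gamma> :: complex and k :: nat and \<psi> :: "int \<Rightarrow> complex" and a1 a2 a3 :: int
  assumes "prime p" and "odd p"
    and "quad_param p D"
    and "smooth_char p D \<xi>"
    and "is_eta_L p D \<eta>"
    and "\<forall>n. n \<noteq> 0 \<longrightarrow> \<xi> (n, 0) = \<eta> n"
    and "\<exists>x. x \<noteq> (0, 0) \<and> \<xi> (gal x) \<noteq> \<xi> x"
    and "ram_index p D dvd conductor p D \<xi>" and "0 < conductor p D \<xi>"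
    and "cmod \<gamma> = 1"
    and "c0 p D \<xi> + 1 \<le> k"
    and "dirichlet_char (p ^ k) \<psi>"
    and "int p dvd a1 * a2 * a3"
  shows "Hhat p D \<xi> \<gamma> k \<psi> a1 a2 a3 = 0"
proof -
  define A where "A = {0..<int p ^ k}"
  define h where "h m = Hfun p D \<xi> \<gamma> m 1 k" for m
  have KL': "(\<Sum>x\<in>A. h (v * x) * ep (p ^ k) (a * x)) = 0" if "int p dvd a" for v a
    unfolding A_def h_def using KL[OF assms(1,2,3,4,8,9,11) that] .
  have pp: "prime (int p)" using assms(1) by simp
  have div3: "int p dvd a1 \<or> int p dvd a2 \<or> int p dvd a3"
    using assms(13) pp by (simp add: prime_dvd_mult_iff)
  have inner: "(\<Sum>x1\<in>A. \<Sum>x2\<in>A. \<Sum>x3\<in>A. h (w * x1 * x2 * x3) * (ep (p ^ k) (a1 * x1) * ep (p ^ k) (a2 * x2) * ep (p ^ k) (a3 * x3))) = 0" for w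
  proof -
    define T where "T x1 x2 x3 = h (w * x1 * x2 * x3) * (ep (p ^ k) (a1 * x1) * ep (p ^ k) (a2 * x2) * ep (p ^ k) (a3 * x3))" for x1 x2 x3
    have "(\<Sum>x1\<in>A. \<Sum>x2\<in>A. \<Sum>x3\<in>A. T x1 x2 x3) = 0"
    proof -
      consider "int p dvd a1" | "int p dvd a2" | "int p dvd a3" using div3 by blast
      then show ?thesis
      proof cases
        case 1
        have z: "(\<Sum>x1\<in>A. T x1 x2 x3) = 0" for x2 x3
        proof -
          have "(\<Sum>x1\<in>A. T x1 x2 x3) = (ep (p ^ k) (a2 * x2) * ep (p ^ k) (a3 * x3)) * (\<Sum>x1\<in>A. h ((w * x2 * x3) * x1) * ep (p ^ k) (a1 * x1))"
            unfolding T_def sum_distrib_left by (intro sum.cong refl) (simp add: ac_simps)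
          then show ?thesis using KL'[OF 1] by simp
        qed
        have "(\<Sum>x1\<in>A. \<Sum>x2\<in>A. \<Sum>x3\<in>A. T x1 x2 x3) = (\<Sum>x2\<in>A. \<Sum>x1\<in>A. \<Sum>x3\<in>A. T x1 x2 x3)"
          by (rule sum.swap)
        also have "\<dots> = (\<Sum>x2\<in>A. \<Sum>x3\<in>A. \<Sum>x1\<in>A. T x1 x2 x3)"
          by (intro sum.cong refl sum.swap)
        also have "\<dots> = 0" by (simp add: z)
        finally show ?thesis .
      next
        case 2
        have z: "(\<Sum>x2\<in>A. T x1 x2 x3) = 0" for x1 x3
        proof -
          have "(\<Sum>x2\<in>A. T x1 x2 x3) = (ep (p ^ k) (a1 * x1) * ep (p ^ k) (a3 * x3)) * (\<Sum>x2\<in>A. h ((w * x1 * x3) * x2) * ep (p ^ k) (a2 * x2))"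
            unfolding T_def sum_distrib_left by (intro sum.cong refl) (simp add: ac_simps)
          then show ?thesis using KL'[OF 2] by simp
        qed
        have "(\<Sum>x1\<in>A. \<Sum>x2\<in>A. \<Sum>x3\<in>A. T x1 x2 x3) = (\<Sum>x1\<in>A. \<Sum>x3\<in>A. \<Sum>x2\<in>A. T x1 x2 x3)"
          by (intro sum.cong refl sum.swap)
        also have "\<dots> = 0" by (simp add: z)
        finally show ?thesis .
      next
        case 3
        have z: "(\<Sum>x3\<in>A. T x1 x2 x3) = 0" for x1 x2
        proof -
          have "(\<Sum>x3\<in>A. T x1 x2 x3) = (ep (p ^ k) (a1 * x1) * ep (p ^ k) (a2 * x2)) * (\<Sum>x3\<in>A. h ((w * x1 * x2) * x3) * ep (p ^ k) (a3 * x3))"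
            unfolding T_def sum_distrib_left by (intro sum.cong refl) (simp add: ac_simps)
          then show ?thesis using KL'[OF 3] by simp
        qed
        then show ?thesis by simp
      qed
    qed
    then show ?thesis unfolding T_def .
  qed
  have "(\<Sum>u\<in>A. \<Sum>x1\<in>A. \<Sum>x2\<in>A. \<Sum>x3\<in>A.
        cnj (\<psi> u) * Hfun p D \<xi> \<gamma> (inv_mod (p ^ k) u * x1 * x2 * x3) 1 k *
        ep (p ^ k) (a1 * x1 + a2 * x2 + a3 * x3 - u * a1 * a2 * a3)) = 0"
  proof (rule sum.neutral, rule ballI)
    fix u assume "u \<in> A"
    define K where "K = cnj (\<psi> u) * ep (p ^ k) (- (u * a1 * a2 * a3))"
    have "(\<Sum>x1\<in>A. \<Sum>x2\<in>A. \<Sum>x3\<in>A.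
        cnj (\<psi> u) * Hfun p D \<xi> \<gamma> (inv_mod (p ^ k) u * x1 * x2 * x3) 1 k *
        ep (p ^ k) (a1 * x1 + a2 * x2 + a3 * x3 - u * a1 * a2 * a3))
      = K * (\<Sum>x1\<in>A. \<Sum>x2\<in>A. \<Sum>x3\<in>A. h (inv_mod (p ^ k) u * x1 * x2 * x3) * (ep (p ^ k) (a1 * x1) * ep (p ^ k) (a2 * x2) * ep (p ^ k) (a3 * x3)))"
    proof -
      have e: "ep (p ^ k) (a1 * x1 + a2 * x2 + a3 * x3 - u * a1 * a2 * a3) = ep (p ^ k) (a1 * x1) * ep (p ^ k) (a2 * x2) * ep (p ^ k) (a3 * x3) * ep (p ^ k) (- (u * a1 * a2 * a3))" for x1 x2 x3
        by (simp only: diff_conv_add_uminus ep_add)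
      show ?thesis unfolding sum_distrib_left e K_def h_def by (intro sum.cong refl) (simp add: ac_simps)
    qed
    then show "(\<Sum>x1\<in>A. \<Sum>x2\<in>A. \<Sum>x3\<in>A.
        cnj (\<psi> u) * Hfun p D \<xi> \<gamma> (inv_mod (p ^ k) u * x1 * x2 * x3) 1 k *
        ep (p ^ k) (a1 * x1 + a2 * x2 + a3 * x3 - u * a1 * a2 * a3)) = 0"
      using inner by simp
  qed
  then show ?thesis unfolding Hhat_def A_def by simp
qed

end
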